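(* Let $\mathbb{T}$ be a geometric theory over $\Sigma$. Then $\mathbf{M}_{\mathbb{T}}=(I_{\mathbb{T}}\rightrightarrows M_{\mathbb{T}})$ is a topological groupoid: the domain and codomain maps $d,c:I_{\mathbb{T}}\to M_{\mathbb{T}}$, the composition map $m:I_{\mathbb{T}}\times_{M_{\mathbb{T}}}I_{\mathbb{T}}\to I_{\mathbb{T}}$, the identity map $e:M_{\mathbb{T}}\to I_{\mathbb{T}}$ and the inverse map $i:I_{\mathbb{T}}\to I_{\mathbb{T}}$ are all continuous.
   Context: Let $\Sigma$ be a single-sorted first-order signature with equality, $\kappa\geq|\Sigma|+\aleph_0$ an infinite cardinal, and $\mathbb{S}$ a fixed set of cardinality at least $\kappa$. An $\mathbb{S}$-indexed $\Sigma$-structure is one whose underlying set is a quotient $A/{\sim}$ of a subset $A\subseteq\mathbb{S}$ (elements $[a]$). $M_\Sigma$ is the set of all such structures and $I_\Sigma$ the set of all isomorphisms between them, with domain and codomain maps $d,c$. The logical topology on $M_\Sigma$ is the coarsest containing the sets $\{\mathbf{M}:[a]\in\mathbf{M}\}$ ($a\in\mathbb{S}$), $\{\mathbf{M}:[\mathbf{a}]\in R^{\mathbf{M}}\}$ (each $n$-ary relation symbol $R$ including equality and nullary symbols), and $\{\mathbf{M}:f^{\mathbf{M}}([\mathbf{a}])=[b]\}$ (each function symbol $f$). The logical topology on $I_\Sigma$ is the coarsest making $d,c$ continuous and containing all $\{\mathbf{f}:[a]\in d(\mathbf{f}),[b]\in c(\mathbf{f}),\mathbf{f}([a])=[b]\}$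 ($a,b\in\mathbb{S}$). $M_{\mathbb{T}}\subseteq M_\Sigma$ is the set of $\mathbb{S}$-indexed $\mathbb{T}$-models and $I_{\mathbb{T}}\subseteq I_\Sigma$ the set of isomorphisms between them, with subspace topologies (the fibre product $I_{\mathbb{T}}\times_{M_{\mathbb{T}}}I_{\mathbb{T}}$ with its subspace-of-product topology). *)

theory Defs
  imports "HOL-Analysis.Analysis"
begin

text \<open>A single-sorted signature is given by a type 'r of relation symbols with arity
  function ar_r and a type 'f of function symbols with arity function ar_f.
  Equality is built in.\<close>

datatype ('f, 'v) trm = Var 'v | App 'f "('f, 'v) trm list"

datatype ('r, 'f, 'v, 'i) gfm =
    GEq "('f, 'v) trm" "('f, 'v) trm"
  | GRel 'r "('f, 'v) trm list"
  | GTop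
  | GBot
  | GConj "('r, 'f, 'v, 'i) gfm" "('r, 'f, 'v, 'i) gfm"
  | GDisj "'i set" "'i \<Rightarrow> ('r, 'f, 'v, 'i) gfm"
  | GEx 'v "('r, 'f, 'v, 'i) gfm"

fun wf_trm :: "('f \<Rightarrow> nat) \<Rightarrow> ('f, 'v) trm \<Rightarrow> bool" where
  "wf_trm ar_f (Var x) = True"
| "wf_trm ar_f (App f ts) = (length ts = ar_f f \<and> (\<forall>t\<in>set ts. wf_trm ar_f t))"

fun fv_trm :: "('f, 'v) trm \<Rightarrow> 'v set" where
  "fv_trm (Var x) = {x}"
| "fv_trm (App f ts) = (\<Union>t\<in>set ts. fv_trm t)"

primrec wf_gfm :: "('r \<Rightarrow> nat) \<Rightarrow> ('f \<Rightarrow> nat) \<Rightarrow> ('r, 'f, 'v, 'i) gfm \<Rightarrow> bool" where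
  "wf_gfm ar_r ar_f (GEq t u) = (wf_trm ar_f t \<and> wf_trm ar_f u)"
| "wf_gfm ar_r ar_f (GRel R ts) = (length ts = ar_r R \<and> (\<forall>t\<in>set ts. wf_trm ar_f t))"
| "wf_gfm ar_r ar_f GTop = True"
| "wf_gfm ar_r ar_f GBot = True"
| "wf_gfm ar_r ar_f (GConj p q) = (wf_gfm ar_r ar_f p \<and> wf_gfm ar_r ar_f q)"
| "wf_gfm ar_r ar_f (GDisj I ps) = (\<forall>i\<in>I. wf_gfm ar_r ar_f (ps i))"
| "wf_gfm ar_r ar_f (GEx x p) = wf_gfm ar_r ar_f p"

primrec fv_gfm :: "('r, 'f, 'v, 'i) gfm \<Rightarrow> 'v set" where
  "fv_gfm (GEq t u) = fv_trm t \<union> fv_trm u"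
| "fv_gfm (GRel R ts) = (\<Union>t\<in>set ts. fv_trm t)"
| "fv_gfm GTop = {}"
| "fv_gfm GBot = {}"
| "fv_gfm (GConj p q) = fv_gfm p \<union> fv_gfm q"
| "fv_gfm (GDisj I ps) = (\<Union>i\<in>I. fv_gfm (ps i))"
| "fv_gfm (GEx x p) = fv_gfm p - {x}"

text \<open>A geometric sequent  phi |-_xs psi  is a triple (xs, phi, psi) with xs the context.\<close>

type_synonym ('r, 'f, 'v, 'i) gseq = "'v list \<times> ('r, 'f, 'v, 'i) gfm \<times> ('r, 'f, 'v, 'i) gfm"

definition geometric_theory ::
  "('r \<Rightarrow> nat) \<Rightarrow> ('f \<Rightarrow> nat) \<Rightarrow> ('r, 'f, 'v, 'i) gseq set \<Rightarrow> bool" where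
  "geometric_theory ar_r ar_f T \<longleftrightarrow>
     (\<forall>(xs, p, q)\<in>T. wf_gfm ar_r ar_f p \<and> wf_gfm ar_r ar_f q \<and>
        fv_gfm p \<subseteq> set xs \<and> fv_gfm q \<subseteq> set xs)"

text \<open>An S-indexed structure: underlying set A (sdom) a subset of S, equivalence
  relation seqv on A; elements are the classes [a] = seqv `` {a}.
  srel R is the set of tuples (lists of classes) in R^M, sfun f the interpretation
  of f on tuples of classes (canonically {} outside its domain).\<close>

record ('s, 'r, 'f) struct =
  sdom :: "'s set"
  seqv :: "('s \<times> 's) set"
  srel :: "'r \<Rightarrow> 's set list set"
  sfun :: "'f \<Rightarrow> 's set list \<Rightarrow> 's set"

definition cls :: "('s, 'r, 'f) struct \<Rightarrow> 's \<Rightarrow> 's set" where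
  "cls M a = seqv M `` {a}"

definition elems :: "('s, 'r, 'f) struct \<Rightarrow> 's set set" where
  "elems M = sdom M // seqv M"

definition valid_tuple :: "('s, 'r, 'f) struct \<Rightarrow> nat \<Rightarrow> 's set list \<Rightarrow> bool" where
  "valid_tuple M n xs \<longleftrightarrow> length xs = n \<and> set xs \<subseteq> elems M"

definition MSigma :: "'s set \<Rightarrow> ('r \<Rightarrow> nat) \<Rightarrow> ('f \<Rightarrow> nat) \<Rightarrow> ('s, 'r, 'f) struct set" where
  "MSigma S ar_r ar_f = {M. sdom M \<subseteq> S \<and> equiv (sdom M) (seqv M) \<and>
      (\<forall>R. \<forall>xs\<in>srel M R. valid_tuple M (ar_r R) xs) \<and>
      (\<forall>f xs. valid_tuple M (ar_f f) xs \<longrightarrow> sfun M f xs \<in> elems M) \<and>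
      (\<forall>f xs. \<not> valid_tuple M (ar_f f) xs \<longrightarrow> sfun M f xs = {})}"

fun eval_trm :: "('s, 'r, 'f) struct \<Rightarrow> ('v \<Rightarrow> 's set) \<Rightarrow> ('f, 'v) trm \<Rightarrow> 's set" where
  "eval_trm M v (Var x) = v x"
| "eval_trm M v (App f ts) = sfun M f (map (eval_trm M v) ts)"

primrec sat :: "('s, 'r, 'f) struct \<Rightarrow> ('v \<Rightarrow> 's set) \<Rightarrow> ('r, 'f, 'v, 'i) gfm \<Rightarrow> bool" where
  "sat M v (GEq t u) = (eval_trm M v t = eval_trm M v u)"
| "sat M v (GRel R ts) = (map (eval_trm M v) ts \<in> srel M R)"
| "sat M v GTop = True"
| "sat M v GBot = False"
| "sat M v (GConj p q) = (sat M v p \<and> sat M v q)"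
| "sat M v (GDisj I ps) = (\<exists>i\<in>I. sat M v (ps i))"
| "sat M v (GEx x p) = (\<exists>a\<in>elems M. sat M (v(x := a)) p)"

definition sat_seq :: "('s, 'r, 'f) struct \<Rightarrow> ('r, 'f, 'v, 'i) gseq \<Rightarrow> bool" where
  "sat_seq M sq = (case sq of (xs, p, q) \<Rightarrow>
      (\<forall>v. (\<forall>x\<in>set xs. v x \<in> elems M) \<longrightarrow> sat M v p \<longrightarrow> sat M v q))"

definition MT :: "'s set \<Rightarrow> ('r \<Rightarrow> nat) \<Rightarrow> ('f \<Rightarrow> nat) \<Rightarrow> ('r, 'f, 'v, 'i) gseq set
    \<Rightarrow> ('s, 'r, 'f) struct set" where
  "MT S ar_r ar_f T = {M \<in> MSigma S ar_r ar_f. \<forall>sq\<in>T. sat_seq M sq}"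

text \<open>An isomorphism is a triple (M, g, N): domain M, codomain N, and g a bijection
  from the elements of M onto those of N (extensional: {} outside), preserving and
  reflecting relations and commuting with the function symbols.\<close>

type_synonym ('s, 'r, 'f) iso = "('s, 'r, 'f) struct \<times> ('s set \<Rightarrow> 's set) \<times> ('s, 'r, 'f) struct"

definition dom_iso :: "('s, 'r, 'f) iso \<Rightarrow> ('s, 'r, 'f) struct" where
  "dom_iso F = fst F"

definition cod_iso :: "('s, 'r, 'f) iso \<Rightarrow> ('s, 'r, 'f) struct" where
  "cod_iso F = snd (snd F)"

definition fun_iso :: "('s, 'r, 'f) iso \<Rightarrow> 's set \<Rightarrow> 's set" where
  "fun_iso F = fst (snd F)"

definition is_iso :: "('r \<Rightarrow> nat) \<Rightarrow> ('f \<Rightarrow> nat) \<Rightarrow> ('s, 'r, 'f) iso \<Rightarrow> bool" where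
  "is_iso ar_r ar_f F \<longleftrightarrow> (case F of (M, g, N) \<Rightarrow>
      bij_betw g (elems M) (elems N) \<and>
      (\<forall>x. x \<notin> elems M \<longrightarrow> g x = {}) \<and>
      (\<forall>R xs. valid_tuple M (ar_r R) xs \<longrightarrow> (xs \<in> srel M R \<longleftrightarrow> map g xs \<in> srel N R)) \<and>
      (\<forall>f xs. valid_tuple M (ar_f f) xs \<longrightarrow> g (sfun M f xs) = sfun N f (map g xs)))"

definition ISigma :: "'s set \<Rightarrow> ('r \<Rightarrow> nat) \<Rightarrow> ('f \<Rightarrow> nat) \<Rightarrow> ('s, 'r, 'f) iso set" where
  "ISigma S ar_r ar_f = {F. dom_iso F \<in> MSigma S ar_r ar_f \<and> cod_iso F \<in> MSigma S ar_r ar_f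
      \<and> is_iso ar_r ar_f F}"

definition IT :: "'s set \<Rightarrow> ('r \<Rightarrow> nat) \<Rightarrow> ('f \<Rightarrow> nat) \<Rightarrow> ('r, 'f, 'v, 'i) gseq set
    \<Rightarrow> ('s, 'r, 'f) iso set" where
  "IT S ar_r ar_f T = {F \<in> ISigma S ar_r ar_f.
      dom_iso F \<in> MT S ar_r ar_f T \<and> cod_iso F \<in> MT S ar_r ar_f T}"

definition MSigma_subbase :: "'s set \<Rightarrow> ('r \<Rightarrow> nat) \<Rightarrow> ('f \<Rightarrow> nat)
    \<Rightarrow> ('s, 'r, 'f) struct set set" where
  "MSigma_subbase S ar_r ar_f =
     {MSigma S ar_r ar_f}
   \<union> {{M \<in> MSigma S ar_r ar_f. a \<in> sdom M} | a. a \<in> S}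
   \<union> {{M \<in> MSigma S ar_r ar_f. set as \<subseteq> sdom M \<and> map (cls M) as \<in> srel M R}
        | R as. length as = ar_r R \<and> set as \<subseteq> S}
   \<union> {{M \<in> MSigma S ar_r ar_f. a \<in> sdom M \<and> b \<in> sdom M \<and> cls M a = cls M b}
        | a b. a \<in> S \<and> b \<in> S}
   \<union> {{M \<in> MSigma S ar_r ar_f. set as \<subseteq> sdom M \<and> b \<in> sdom M \<and>
          sfun M f (map (cls M) as) = cls M b}
        | f as b. length as = ar_f f \<and> set as \<subseteq> S \<and> b \<in> S}"

definition MSigma_top :: "'s set \<Rightarrow> ('r \<Rightarrow> nat) \<Rightarrow> ('f \<Rightarrow> nat) \<Rightarrow> ('s, 'r, 'f) struct topology" where
  "MSigma_top S ar_r ar_f = topology_generated_by (MSigma_subbase S ar_r ar_f)"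

definition ISigma_subbase :: "'s set \<Rightarrow> ('r \<Rightarrow> nat) \<Rightarrow> ('f \<Rightarrow> nat)
    \<Rightarrow> ('s, 'r, 'f) iso set set" where
  "ISigma_subbase S ar_r ar_f =
     {ISigma S ar_r ar_f}
   \<union> {{F \<in> ISigma S ar_r ar_f. dom_iso F \<in> U} | U. openin (MSigma_top S ar_r ar_f) U}
   \<union> {{F \<in> ISigma S ar_r ar_f. cod_iso F \<in> U} | U. openin (MSigma_top S ar_r ar_f) U}
   \<union> {{F \<in> ISigma S ar_r ar_f. a \<in> sdom (dom_iso F) \<and> b \<in> sdom (cod_iso F) \<and>
          fun_iso F (cls (dom_iso F) a) = cls (cod_iso F) b}
        | a b. a \<in> S \<and> b \<in> S}"

definition ISigma_top :: "'s set \<Rightarrow> ('r \<Rightarrow> nat) \<Rightarrow> ('f \<Rightarrow> nat) \<Rightarrow> ('s, 'r, 'f) iso topology" where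
  "ISigma_top S ar_r ar_f = topology_generated_by (ISigma_subbase S ar_r ar_f)"

definition MT_top :: "'s set \<Rightarrow> ('r \<Rightarrow> nat) \<Rightarrow> ('f \<Rightarrow> nat) \<Rightarrow> ('r, 'f, 'v, 'i) gseq set
    \<Rightarrow> ('s, 'r, 'f) struct topology" where
  "MT_top S ar_r ar_f T = subtopology (MSigma_top S ar_r ar_f) (MT S ar_r ar_f T)"

definition IT_top :: "'s set \<Rightarrow> ('r \<Rightarrow> nat) \<Rightarrow> ('f \<Rightarrow> nat) \<Rightarrow> ('r, 'f, 'v, 'i) gseq set
    \<Rightarrow> ('s, 'r, 'f) iso topology" where
  "IT_top S ar_r ar_f T = subtopology (ISigma_top S ar_r ar_f) (IT S ar_r ar_f T)"

definition ITfib_top :: "'s set \<Rightarrow> ('r \<Rightarrow> nat) \<Rightarrow> ('f \<Rightarrow> nat) \<Rightarrow> ('r, 'f, 'v, 'i) gseq set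
    \<Rightarrow> (('s, 'r, 'f) iso \<times> ('s, 'r, 'f) iso) topology" where
  "ITfib_top S ar_r ar_f T =
     subtopology (prod_topology (IT_top S ar_r ar_f T) (IT_top S ar_r ar_f T))
       {(F, G). F \<in> IT S ar_r ar_f T \<and> G \<in> IT S ar_r ar_f T \<and> cod_iso F = dom_iso G}"

definition comp_iso :: "('s, 'r, 'f) iso \<times> ('s, 'r, 'f) iso \<Rightarrow> ('s, 'r, 'f) iso" where
  "comp_iso FG = (case FG of (F, G) \<Rightarrow>
     (dom_iso F, (\<lambda>x. if x \<in> elems (dom_iso F) then fun_iso G (fun_iso F x) else {}), cod_iso G))"

definition id_iso :: "('s, 'r, 'f) struct \<Rightarrow> ('s, 'r, 'f) iso" where
  "id_iso M = (M, (\<lambda>x. if x \<in> elems M then x else {}), M)"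

definition inv_iso :: "('s, 'r, 'f) iso \<Rightarrow> ('s, 'r, 'f) iso" where
  "inv_iso F = (cod_iso F,
     (\<lambda>y. if y \<in> elems (cod_iso F) then the_inv_into (elems (dom_iso F)) (fun_iso F) y else {}),
     dom_iso F)"

end

theory Submission
  imports Defs
begin


lemma elems_iff: "x \<in> elems M \<longleftrightarrow> (\<exists>a\<in>sdom M. x = cls M a)"
  by (auto simp: elems_def cls_def quotient_def)

lemma iso_id:
  assumes "M \<in> MSigma S ar_r ar_f"
  shows "is_iso ar_r ar_f (id_iso M)"
proof -
  have b: "bij_betw (\<lambda>x. if x \<in> elems M then x else {}) (elems M) (elems M)"
    by (rule bij_betw_cong[THEN iffD1, OF _ bij_betw_id]) auto
  have m: "map (\<lambda>x. if x \<in> elems M then x else {}) xs = xs" if "set xs \<subseteq> elems M" for xs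
    using that by (auto intro!: map_idI)
  show ?thesis unfolding is_iso_def id_iso_def prod.case
  proof (intro conjI allI impI)
    fix R xs assume "valid_tuple M (ar_r R) xs"
    then show "(xs \<in> srel M R) = (map (\<lambda>x. if x \<in> elems M then x else {}) xs \<in> srel M R)"
      using m by (simp add: valid_tuple_def)
  next
    fix fs xs assume v: "valid_tuple M (ar_f fs) xs"
    then have "sfun M fs xs \<in> elems M" using assms by (auto simp: MSigma_def)
    then show "(if sfun M fs xs \<in> elems M then sfun M fs xs else {}) = sfun M fs (map (\<lambda>x. if x \<in> elems M then x else {}) xs)"
      using m v by (simp add: valid_tuple_def)
  qed (use b in auto)
qed

lemma valid_map:
  assumes "bij_betw f A B" "length xs = n \<and> set xs \<subseteq> A"
  shows "length (map f xs) = n \<and> set (map f xs) \<subseteq> B"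
  using assms bij_betw_imp_surj_on by fastforce

lemma iso_comp:
  assumes F: "is_iso ar_r ar_f (M, f, N)" and G: "is_iso ar_r ar_f (N, g, P)"
    and M: "M \<in> MSigma S ar_r ar_f"
  shows "is_iso ar_r ar_f (M, (\<lambda>x. if x \<in> elems M then g (f x) else {}), P)"
proof -
  have bf: "bij_betw f (elems M) (elems N)" and bg: "bij_betw g (elems N) (elems P)"
    using F G by (auto simp: is_iso_def)
  have b: "bij_betw (\<lambda>x. if x \<in> elems M then g (f x) else {}) (elems M) (elems P)"
    by (rule bij_betw_cong[THEN iffD1, OF _ bij_betw_trans[OF bf bg]]) auto
  have mp: "map (\<lambda>x. if x \<in> elems M then g (f x) else {}) xs = map g (map f xs)"
    if "set xs \<subseteq> elems M" for xs using that by auto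
  show ?thesis unfolding is_iso_def prod.case
  proof (intro conjI allI impI)
    show "bij_betw (\<lambda>x. if x \<in> elems M then g (f x) else {}) (elems M) (elems P)" by (rule b)
    show "\<And>x. x \<notin> elems M \<Longrightarrow> (if x \<in> elems M then g (f x) else {}) = {}" by simp
  next
    fix R xs assume v: "valid_tuple M (ar_r R) xs"
    then have v': "valid_tuple N (ar_r R) (map f xs)"
      using valid_map[OF bf] by (auto simp: valid_tuple_def)
    have e: "map (\<lambda>x. if x \<in> elems M then g (f x) else {}) xs = map g (map f xs)"
      using v by (auto simp: valid_tuple_def)
    have "(xs \<in> srel M R) = (map f xs \<in> srel N R)" using F v by (simp add: is_iso_def)
    also have "\<dots> = (map g (map f xs) \<in> srel P R)" using G v' by (simp add: is_iso_def)
    finally show "(xs \<in> srel M R) = (map (\<lambda>x. if x \<in> elems M then g (f x) else {}) xs \<in> srel P R)"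
      unfolding e .
  next
    fix fs xs assume v: "valid_tuple M (ar_f fs) xs"
    then have v': "valid_tuple N (ar_f fs) (map f xs)"
      using valid_map[OF bf] by (auto simp: valid_tuple_def)
    have "sfun M fs xs \<in> elems M" using M v by (auto simp: MSigma_def)
    moreover have e: "map (\<lambda>x. if x \<in> elems M then g (f x) else {}) xs = map g (map f xs)"
      using v by (auto simp: valid_tuple_def)
    moreover have "f (sfun M fs xs) = sfun N fs (map f xs)" using F v by (simp add: is_iso_def)
    moreover have "g (sfun N fs (map f xs)) = sfun P fs (map g (map f xs))" using G v' by (simp add: is_iso_def)
    ultimately show "(if sfun M fs xs \<in> elems M then g (f (sfun M fs xs)) else {}) =
          sfun P fs (map (\<lambda>x. if x \<in> elems M then g (f x) else {}) xs)"
      by (simp only: if_True)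
  qed
qed

lemma iso_inv:
  assumes F: "is_iso ar_r ar_f (M, f, N)" and M: "M \<in> MSigma S ar_r ar_f"
  shows "is_iso ar_r ar_f (N, (\<lambda>y. if y \<in> elems N then the_inv_into (elems M) f y else {}), M)"
proof -
  define h where "h = (\<lambda>y. if y \<in> elems N then the_inv_into (elems M) f y else {})"
  have bf: "bij_betw f (elems M) (elems N)" using F by (auto simp: is_iso_def)
  have b: "bij_betw h (elems N) (elems M)" unfolding h_def
    by (rule bij_betw_cong[THEN iffD1, OF _ bij_betw_the_inv_into[OF bf]]) auto
  have fh: "f (h y) = y" if "y \<in> elems N" for y
    using that bf unfolding h_def by (simp add: f_the_inv_into_f_bij_betw)
  have hf: "h (f x) = x" if "x \<in> elems M" for x
    using that bf unfolding h_def
    by (auto simp: the_inv_into_f_f bij_betw_def)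
  have key: "valid_tuple M n (map h ys) \<and> map f (map h ys) = ys" if "valid_tuple N n ys" for n ys
    using that valid_map[OF b, of ys n] fh by (auto simp: valid_tuple_def intro!: map_idI)
  show ?thesis unfolding h_def[symmetric] is_iso_def prod.case
  proof (intro conjI allI impI)
    show "bij_betw h (elems N) (elems M)" by (rule b)
    show "\<And>x. x \<notin> elems N \<Longrightarrow> h x = {}" by (simp add: h_def)
  next
    fix R ys assume v: "valid_tuple N (ar_r R) ys"
    from key[OF v] have k: "valid_tuple M (ar_r R) (map h ys)" "map f (map h ys) = ys" by auto
    have "(map h ys \<in> srel M R) = (map f (map h ys) \<in> srel N R)"
      using F k(1) by (auto simp: is_iso_def)
    then show "(ys \<in> srel N R) = (map h ys \<in> srel M R)" using k(2) by simp
  next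
    fix fs ys assume v: "valid_tuple N (ar_f fs) ys"
    from key[OF v] have k: "valid_tuple M (ar_f fs) (map h ys)" "map f (map h ys) = ys" by auto
    have e: "f (sfun M fs (map h ys)) = sfun N fs ys"
      using F k by (auto simp: is_iso_def)
    have "sfun M fs (map h ys) \<in> elems M" using M k(1) by (auto simp: MSigma_def)
    then show "h (sfun N fs ys) = sfun M fs (map h ys)" using hf e by metis
  qed
qed



context
  fixes S :: "'s set" and ar_r :: "'r \<Rightarrow> nat" and ar_f :: "'f \<Rightarrow> nat"
    and T :: "('r, 'f, 'v, 'i) gseq set"
begin

lemma topM: "topspace (MSigma_top S ar_r ar_f) = MSigma S ar_r ar_f"
  unfolding MSigma_top_def topology_generated_by_topspace MSigma_subbase_def by blast

lemma topI: "topspace (ISigma_top S ar_r ar_f) = ISigma S ar_r ar_f"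
  unfolding ISigma_top_def topology_generated_by_topspace ISigma_subbase_def by blast

lemma MT_sub: "MT S ar_r ar_f T \<subseteq> MSigma S ar_r ar_f" by (auto simp: MT_def)
lemma IT_sub: "IT S ar_r ar_f T \<subseteq> ISigma S ar_r ar_f" by (auto simp: IT_def)

lemma topMT: "topspace (MT_top S ar_r ar_f T) = MT S ar_r ar_f T"
  using MT_sub by (auto simp: MT_top_def topM)
lemma topIT: "topspace (IT_top S ar_r ar_f T) = IT S ar_r ar_f T"
  using IT_sub by (auto simp: IT_top_def topI)
lemma topFib: "topspace (ITfib_top S ar_r ar_f T) =
   {(F, G). F \<in> IT S ar_r ar_f T \<and> G \<in> IT S ar_r ar_f T \<and> cod_iso F = dom_iso G}"
  by (auto simp: ITfib_top_def topIT)

lemma open_IT: "V \<in> ISigma_subbase S ar_r ar_f \<Longrightarrow> openin (IT_top S ar_r ar_f T) (V \<inter> IT S ar_r ar_f T)"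
  unfolding IT_top_def ISigma_top_def
  by (intro openin_subtopology_Int topology_generated_by_Basis)

lemma open_IT': "V \<in> ISigma_subbase S ar_r ar_f \<Longrightarrow> openin (IT_top S ar_r ar_f T) {F \<in> IT S ar_r ar_f T. F \<in> V}"
  using open_IT by (metis Collect_mem_eq Int_commute Int_def)

lemma cont_IT:
  assumes "f \<in> topspace X \<rightarrow> IT S ar_r ar_f T"
    and "\<And>V. V \<in> ISigma_subbase S ar_r ar_f \<Longrightarrow> openin X {x \<in> topspace X. f x \<in> V}"
  shows "continuous_map X (IT_top S ar_r ar_f T) f"
  unfolding IT_top_def
proof (rule continuous_map_into_subtopology[OF _ assms(1)])
  have "\<Union>(ISigma_subbase S ar_r ar_f) = ISigma S ar_r ar_f"
    using topI unfolding ISigma_top_def topology_generated_by_topspace .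
  then show "continuous_map X (ISigma_top S ar_r ar_f) f"
    unfolding ISigma_top_def using assms IT_sub
    by (intro continuous_on_generated_topo) (auto simp: vimage_def Int_def conj_commute)
qed

lemma dom_cont: "continuous_map (IT_top S ar_r ar_f T) (MT_top S ar_r ar_f T) dom_iso"
  unfolding MT_top_def
proof (rule continuous_map_into_subtopology)
  show "dom_iso \<in> topspace (IT_top S ar_r ar_f T) \<rightarrow> MT S ar_r ar_f T"
    by (auto simp: topIT IT_def)
  show "continuous_map (IT_top S ar_r ar_f T) (MSigma_top S ar_r ar_f) dom_iso"
    unfolding continuous_map_def
  proof (intro conjI allI impI)
    show "dom_iso \<in> topspace (IT_top S ar_r ar_f T) \<rightarrow> topspace (MSigma_top S ar_r ar_f)"
      using IT_sub by (auto simp: topIT topM ISigma_def)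
    fix U assume "openin (MSigma_top S ar_r ar_f) U"
    then have "{F \<in> ISigma S ar_r ar_f. dom_iso F \<in> U} \<in> ISigma_subbase S ar_r ar_f"
      unfolding ISigma_subbase_def by blast
    from open_IT'[OF this] show "openin (IT_top S ar_r ar_f T) {x \<in> topspace (IT_top S ar_r ar_f T). dom_iso x \<in> U}"
      using IT_sub by (simp add: topIT) (smt (verit) Collect_cong in_mono)
  qed
qed

lemma cod_cont: "continuous_map (IT_top S ar_r ar_f T) (MT_top S ar_r ar_f T) cod_iso"
  unfolding MT_top_def
proof (rule continuous_map_into_subtopology)
  show "cod_iso \<in> topspace (IT_top S ar_r ar_f T) \<rightarrow> MT S ar_r ar_f T"
    by (auto simp: topIT IT_def)
  show "continuous_map (IT_top S ar_r ar_f T) (MSigma_top S ar_r ar_f) cod_iso"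
    unfolding continuous_map_def
  proof (intro conjI allI impI)
    show "cod_iso \<in> topspace (IT_top S ar_r ar_f T) \<rightarrow> topspace (MSigma_top S ar_r ar_f)"
      using IT_sub by (auto simp: topIT topM ISigma_def)
    fix U assume "openin (MSigma_top S ar_r ar_f) U"
    then have "{F \<in> ISigma S ar_r ar_f. cod_iso F \<in> U} \<in> ISigma_subbase S ar_r ar_f"
      unfolding ISigma_subbase_def by blast
    from open_IT'[OF this] show "openin (IT_top S ar_r ar_f T) {x \<in> topspace (IT_top S ar_r ar_f T). cod_iso x \<in> U}"
      using IT_sub by (simp add: topIT) (smt (verit) Collect_cong in_mono)
  qed
qed


lemma iso_split: "F = (dom_iso F, fun_iso F, cod_iso F)"
  by (simp add: dom_iso_def fun_iso_def cod_iso_def)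

lemma comp_simps: "dom_iso (comp_iso (F, G)) = dom_iso F" "cod_iso (comp_iso (F, G)) = cod_iso G"
  "fun_iso (comp_iso (F, G)) = (\<lambda>x. if x \<in> elems (dom_iso F) then fun_iso G (fun_iso F x) else {})"
  by (simp_all add: comp_iso_def dom_iso_def fun_iso_def cod_iso_def)

lemma id_simps: "dom_iso (id_iso M) = M" "cod_iso (id_iso M) = M"
  "fun_iso (id_iso M) = (\<lambda>x. if x \<in> elems M then x else {})"
  by (simp_all add: id_iso_def dom_iso_def fun_iso_def cod_iso_def)

lemma inv_simps: "dom_iso (inv_iso F) = cod_iso F" "cod_iso (inv_iso F) = dom_iso F"
  "fun_iso (inv_iso F) = (\<lambda>y. if y \<in> elems (cod_iso F) then the_inv_into (elems (dom_iso F)) (fun_iso F) y else {})"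
  by (simp_all add: inv_iso_def dom_iso_def fun_iso_def cod_iso_def)

lemma comp_IT:
  assumes F: "F \<in> IT S ar_r ar_f T" and G: "G \<in> IT S ar_r ar_f T" and e: "cod_iso F = dom_iso G"
  shows "comp_iso (F, G) \<in> IT S ar_r ar_f T"
proof -
  have i1: "is_iso ar_r ar_f (dom_iso F, fun_iso F, cod_iso F)" using F iso_split[of F] by (simp add: IT_def ISigma_def)
  have i2: "is_iso ar_r ar_f (cod_iso F, fun_iso G, cod_iso G)" using G iso_split[of G] e by (simp add: IT_def ISigma_def)
  have "is_iso ar_r ar_f (comp_iso (F, G))"
    unfolding comp_iso_def prod.case
    using iso_comp[OF i1 i2, where S=S] F by (auto simp: IT_def ISigma_def)
  then show ?thesis using F G by (simp add: IT_def ISigma_def comp_simps)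
qed

lemma id_IT: assumes "M \<in> MT S ar_r ar_f T" shows "id_iso M \<in> IT S ar_r ar_f T"
  using assms iso_id[of M S ar_r ar_f] MT_sub by (auto simp: IT_def ISigma_def id_simps)

lemma inv_IT: assumes F: "F \<in> IT S ar_r ar_f T" shows "inv_iso F \<in> IT S ar_r ar_f T"
proof -
  have i1: "is_iso ar_r ar_f (dom_iso F, fun_iso F, cod_iso F)" using F iso_split[of F] by (simp add: IT_def ISigma_def)
  have "is_iso ar_r ar_f (inv_iso F)"
    unfolding inv_iso_def using iso_inv[OF i1, where S=S] F by (auto simp: IT_def ISigma_def)
  then show ?thesis using F by (simp add: IT_def ISigma_def inv_simps)
qed

lemma cls_elems: "a \<in> sdom M \<Longrightarrow> cls M a \<in> elems M"
  using elems_iff by blast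


definition Aab where "Aab a b = {F \<in> ISigma S ar_r ar_f. a \<in> sdom (dom_iso F) \<and> b \<in> sdom (cod_iso F) \<and>
          fun_iso F (cls (dom_iso F) a) = cls (cod_iso F) b}"

lemma Aab_sub: "a \<in> S \<Longrightarrow> b \<in> S \<Longrightarrow> Aab a b \<in> ISigma_subbase S ar_r ar_f"
  unfolding Aab_def ISigma_subbase_def by blast

lemma subbase_cases:
  assumes "V \<in> ISigma_subbase S ar_r ar_f"
  obtains "V = ISigma S ar_r ar_f"
  | U where "openin (MSigma_top S ar_r ar_f) U" "V = {F \<in> ISigma S ar_r ar_f. dom_iso F \<in> U}"
  | U where "openin (MSigma_top S ar_r ar_f) U" "V = {F \<in> ISigma S ar_r ar_f. cod_iso F \<in> U}"
  | a b where "a \<in> S" "b \<in> S" "V = Aab a b"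
  using assms unfolding ISigma_subbase_def Aab_def by blast

lemma IT_iso: "F \<in> IT S ar_r ar_f T \<Longrightarrow> bij_betw (fun_iso F) (elems (dom_iso F)) (elems (cod_iso F))"
  using iso_split[of F] by (auto simp: IT_def ISigma_def is_iso_def split: prod.splits)

lemma MSigma_S: "M \<in> MSigma S ar_r ar_f \<Longrightarrow> sdom M \<subseteq> S" by (simp add: MSigma_def)

lemma comp_cont: "continuous_map (ITfib_top S ar_r ar_f T) (IT_top S ar_r ar_f T) comp_iso"
proof (rule cont_IT)
  let ?X = "ITfib_top S ar_r ar_f T"
  let ?I = "IT S ar_r ar_f T"
  show "comp_iso \<in> topspace ?X \<rightarrow> ?I" using comp_IT by (auto simp: topFib)
  have cf: "continuous_map ?X (IT_top S ar_r ar_f T) fst"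
    unfolding ITfib_top_def by (rule continuous_map_subtopology_fst)
  have cs: "continuous_map ?X (IT_top S ar_r ar_f T) snd"
    unfolding ITfib_top_def by (rule continuous_map_subtopology_snd)
  have of: "openin ?X {p \<in> topspace ?X. fst p \<in> W}" if "W \<in> ISigma_subbase S ar_r ar_f" for W
  proof -
    have "{p \<in> topspace ?X. fst p \<in> W} = {p \<in> topspace ?X. fst p \<in> W \<inter> ?I}" by (auto simp: topFib)
    then show ?thesis using openin_continuous_map_preimage[OF cf open_IT[OF that]] by simp
  qed
  have os: "openin ?X {p \<in> topspace ?X. snd p \<in> W}" if "W \<in> ISigma_subbase S ar_r ar_f" for W
  proof -
    have "{p \<in> topspace ?X. snd p \<in> W} = {p \<in> topspace ?X. snd p \<in> W \<inter> ?I}" by (auto simp: topFib)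
    then show ?thesis using openin_continuous_map_preimage[OF cs open_IT[OF that]] by simp
  qed
  have inI: "comp_iso p \<in> ?I" if "p \<in> topspace ?X" for p using that comp_IT by (auto simp: topFib)
  fix V assume V: "V \<in> ISigma_subbase S ar_r ar_f"
  then show "openin ?X {x \<in> topspace ?X. comp_iso x \<in> V}"
  proof (cases rule: subbase_cases)
    case 1
    then have "{x \<in> topspace ?X. comp_iso x \<in> V} = topspace ?X" using inI IT_sub by auto
    then show ?thesis by simp
  next
    case (2 U)
    have "{x \<in> topspace ?X. comp_iso x \<in> V} = {p \<in> topspace ?X. fst p \<in> V}"
    proof (intro Collect_cong conj_cong refl)
      fix x assume x: "x \<in> topspace ?X"
      obtain F G where x': "x = (F, G)" by (cases x)
      have "comp_iso x \<in> ISigma S ar_r ar_f" "fst x \<in> ISigma S ar_r ar_f"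
        using inI[OF x] x IT_sub by (auto simp: topFib)
      then show "(comp_iso x \<in> V) = (fst x \<in> V)" unfolding 2(2) x' by (simp add: comp_simps)
    qed
    moreover have "V \<in> ISigma_subbase S ar_r ar_f" by (rule V)
    ultimately show ?thesis using of by simp
  next
    case (3 U)
    have "{x \<in> topspace ?X. comp_iso x \<in> V} = {p \<in> topspace ?X. snd p \<in> V}"
    proof (intro Collect_cong conj_cong refl)
      fix x assume x: "x \<in> topspace ?X"
      obtain F G where x': "x = (F, G)" by (cases x)
      have "comp_iso x \<in> ISigma S ar_r ar_f" "snd x \<in> ISigma S ar_r ar_f"
        using inI[OF x] x IT_sub by (auto simp: topFib)
      then show "(comp_iso x \<in> V) = (snd x \<in> V)" unfolding 3(2) x' by (simp add: comp_simps)
    qed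
    then show ?thesis using os V by simp
  next
    case (4 a b)
    have eq: "{x \<in> topspace ?X. comp_iso x \<in> V} =
      (\<Union>c\<in>S. {p \<in> topspace ?X. fst p \<in> Aab a c} \<inter> {p \<in> topspace ?X. snd p \<in> Aab c b})"
    proof (intro equalityI subsetI)
      fix p assume p: "p \<in> {x \<in> topspace ?X. comp_iso x \<in> V}"
      obtain F G where pFG: "p = (F, G)" by (cases p)
      have pX: "p \<in> topspace ?X" using p by blast
      have F: "F \<in> ?I" and G: "G \<in> ?I" and e: "cod_iso F = dom_iso G" using pX unfolding pFG topFib by blast+
      have FS: "F \<in> ISigma S ar_r ar_f" and GS: "G \<in> ISigma S ar_r ar_f" using F G IT_sub by blast+
      have c: "comp_iso (F, G) \<in> Aab a b" using p 4(3) unfolding pFG by blast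
      then have a: "a \<in> sdom (dom_iso F)" and b: "b \<in> sdom (cod_iso G)"
        and h0: "fun_iso (comp_iso (F, G)) (cls (dom_iso F) a) = cls (cod_iso G) b"
        unfolding Aab_def by (simp_all add: comp_simps(1,2))
      have h: "fun_iso G (fun_iso F (cls (dom_iso F) a)) = cls (cod_iso G) b"
        using h0 cls_elems[OF a] unfolding comp_simps(3) by simp
      have "fun_iso F (cls (dom_iso F) a) \<in> elems (cod_iso F)"
        using IT_iso[OF F] cls_elems[OF a] bij_betwE by blast
      then have "\<exists>c\<in>sdom (cod_iso F). fun_iso F (cls (dom_iso F) a) = cls (cod_iso F) c"
        by (simp only: elems_iff)
      then obtain c where c: "c \<in> sdom (cod_iso F)" "fun_iso F (cls (dom_iso F) a) = cls (cod_iso F) c"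
        by (rule bexE)
      have "cod_iso F \<in> MSigma S ar_r ar_f" using FS unfolding ISigma_def by blast
      then have cS: "c \<in> S" using c(1) MSigma_S by blast
      have "F \<in> Aab a c" unfolding Aab_def using FS a c by simp
      moreover have "G \<in> Aab c b"
      proof -
        have g1: "c \<in> sdom (dom_iso G)" using c(1) e by simp
        have g2: "fun_iso G (cls (dom_iso G) c) = cls (cod_iso G) b" using h c(2) e by simp
        show ?thesis unfolding Aab_def using GS g1 g2 b by simp
      qed
      ultimately have "p \<in> {p \<in> topspace ?X. fst p \<in> Aab a c} \<inter> {p \<in> topspace ?X. snd p \<in> Aab c b}"
        using pX unfolding pFG by simp
      then show "p \<in> (\<Union>c\<in>S. {p \<in> topspace ?X. fst p \<in> Aab a c} \<inter> {p \<in> topspace ?X. snd p \<in> Aab c b})"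
        using cS by blast
    next
      fix p assume "p \<in> (\<Union>c\<in>S. {p \<in> topspace ?X. fst p \<in> Aab a c} \<inter> {p \<in> topspace ?X. snd p \<in> Aab c b})"
      then obtain c where p: "p \<in> topspace ?X" and FA: "fst p \<in> Aab a c" and GA: "snd p \<in> Aab c b"
        by blast
      obtain F G where pFG: "p = (F, G)" by (cases p)
      have e: "cod_iso F = dom_iso G" using p unfolding pFG topFib by blast
      have cI: "comp_iso (F, G) \<in> ISigma S ar_r ar_f" using inI[OF p] IT_sub unfolding pFG by blast
      have a: "a \<in> sdom (dom_iso F)" and c1: "fun_iso F (cls (dom_iso F) a) = cls (cod_iso F) c"
        using FA unfolding pFG Aab_def by simp_all
      have b: "b \<in> sdom (cod_iso G)" and c2: "fun_iso G (cls (dom_iso G) c) = cls (cod_iso G) b"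
        using GA unfolding pFG Aab_def by simp_all
      have "fun_iso (comp_iso (F, G)) (cls (dom_iso (comp_iso (F, G))) a) = cls (cod_iso (comp_iso (F, G))) b"
        unfolding comp_simps using cls_elems[OF a] c1 c2 e by simp
      then have "comp_iso (F, G) \<in> Aab a b"
        unfolding Aab_def using cI a b by (simp add: comp_simps)
      then show "p \<in> {x \<in> topspace ?X. comp_iso x \<in> V}" using p 4(3) unfolding pFG by blast
    qed
    have "openin ?X ({p \<in> topspace ?X. fst p \<in> Aab a c} \<inter> {p \<in> topspace ?X. snd p \<in> Aab c b})"
      if "c \<in> S" for c
      using of[OF Aab_sub[OF 4(1) that]] os[OF Aab_sub[OF that 4(2)]] by (rule openin_Int)
    then show ?thesis unfolding eq by (intro openin_Union) blast
  qed
qed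


lemma MT_open_sub: "openin (MSigma_top S ar_r ar_f) U \<Longrightarrow> openin (MT_top S ar_r ar_f T) {M \<in> MT S ar_r ar_f T. M \<in> U}"
  unfolding MT_top_def using openin_subtopology_Int[of "MSigma_top S ar_r ar_f" U "MT S ar_r ar_f T"]
  by (simp add: Int_def conj_commute)

lemma id_cont: "continuous_map (MT_top S ar_r ar_f T) (IT_top S ar_r ar_f T) id_iso"
proof (rule cont_IT)
  let ?X = "MT_top S ar_r ar_f T"
  let ?M = "MT S ar_r ar_f T"
  show "id_iso \<in> topspace ?X \<rightarrow> IT S ar_r ar_f T" using id_IT by (auto simp: topMT)
  have inI: "id_iso M \<in> ISigma S ar_r ar_f" if "M \<in> ?M" for M using id_IT[OF that] IT_sub by blast
  fix V assume V: "V \<in> ISigma_subbase S ar_r ar_f"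
  then show "openin ?X {x \<in> topspace ?X. id_iso x \<in> V}"
  proof (cases rule: subbase_cases)
    case 1
    then have "{x \<in> topspace ?X. id_iso x \<in> V} = topspace ?X" using inI by (auto simp: topMT)
    then show ?thesis by simp
  next
    case (2 U)
    have "{x \<in> topspace ?X. id_iso x \<in> V} = {M \<in> ?M. M \<in> U}"
      unfolding topMT 2(2) using inI by (auto simp: id_simps)
    then show ?thesis using MT_open_sub[OF 2(1)] by simp
  next
    case (3 U)
    have "{x \<in> topspace ?X. id_iso x \<in> V} = {M \<in> ?M. M \<in> U}"
      unfolding topMT 3(2) using inI by (auto simp: id_simps)
    then show ?thesis using MT_open_sub[OF 3(1)] by simp
  next
    case (4 a b)
    let ?E = "{M \<in> MSigma S ar_r ar_f. a \<in> sdom M \<and> b \<in> sdom M \<and> cls M a = cls M b}"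
    have E: "?E \<in> MSigma_subbase S ar_r ar_f" unfolding MSigma_subbase_def using 4 by blast
    have "{x \<in> topspace ?X. id_iso x \<in> V} = {M \<in> ?M. M \<in> ?E}"
    proof (intro Collect_cong)
      fix M
      show "(M \<in> topspace ?X \<and> id_iso M \<in> V) = (M \<in> ?M \<and> M \<in> ?E)"
      proof (cases "M \<in> ?M")
        case True
        have ms: "M \<in> MSigma S ar_r ar_f" using True MT_sub by blast
        show ?thesis
        proof (cases "a \<in> sdom M")
          case a: True
          show ?thesis unfolding topMT 4(3) Aab_def using True ms inI[OF True] cls_elems[OF a]
            by (simp add: id_simps)
        qed (simp add: 4(3) Aab_def id_simps)
      qed (simp add: topMT)
    qed
    then show ?thesis
      using MT_open_sub[OF topology_generated_by_Basis[OF E, folded MSigma_top_def]] by simp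
  qed
qed

lemma inv_cont: "continuous_map (IT_top S ar_r ar_f T) (IT_top S ar_r ar_f T) inv_iso"
proof (rule cont_IT)
  let ?X = "IT_top S ar_r ar_f T"
  let ?I = "IT S ar_r ar_f T"
  show "inv_iso \<in> topspace ?X \<rightarrow> ?I" using inv_IT by (auto simp: topIT)
  have inI: "inv_iso F \<in> ISigma S ar_r ar_f" if "F \<in> ?I" for F using inv_IT[OF that] IT_sub by blast
  have inI': "F \<in> ISigma S ar_r ar_f" if "F \<in> ?I" for F using that IT_sub by blast
  fix V assume V: "V \<in> ISigma_subbase S ar_r ar_f"
  then show "openin ?X {x \<in> topspace ?X. inv_iso x \<in> V}"
  proof (cases rule: subbase_cases)
    case 1
    then have "{x \<in> topspace ?X. inv_iso x \<in> V} = topspace ?X" using inI by (auto simp: topIT)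
    then show ?thesis by simp
  next
    case (2 U)
    have W: "{F \<in> ISigma S ar_r ar_f. cod_iso F \<in> U} \<in> ISigma_subbase S ar_r ar_f"
      unfolding ISigma_subbase_def using 2(1) by blast
    have "{x \<in> topspace ?X. inv_iso x \<in> V} = {F \<in> ?I. F \<in> {F \<in> ISigma S ar_r ar_f. cod_iso F \<in> U}}"
      unfolding topIT 2(2) using inI inI' by (auto simp: inv_simps)
    then show ?thesis using open_IT'[OF W] by simp
  next
    case (3 U)
    have W: "{F \<in> ISigma S ar_r ar_f. dom_iso F \<in> U} \<in> ISigma_subbase S ar_r ar_f"
      unfolding ISigma_subbase_def using 3(1) by blast
    have "{x \<in> topspace ?X. inv_iso x \<in> V} = {F \<in> ?I. F \<in> {F \<in> ISigma S ar_r ar_f. dom_iso F \<in> U}}"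
      unfolding topIT 3(2) using inI inI' by (auto simp: inv_simps)
    then show ?thesis using open_IT'[OF W] by simp
  next
    case (4 a b)
    have W: "Aab b a \<in> ISigma_subbase S ar_r ar_f" using Aab_sub 4 by blast
    have "{x \<in> topspace ?X. inv_iso x \<in> V} = {F \<in> ?I. F \<in> Aab b a}"
    proof (intro Collect_cong)
      fix F
      show "(F \<in> topspace ?X \<and> inv_iso F \<in> V) = (F \<in> ?I \<and> F \<in> Aab b a)"
      proof (cases "F \<in> ?I \<and> a \<in> sdom (cod_iso F) \<and> b \<in> sdom (dom_iso F)")
        case True
        then have F: "F \<in> ?I" and a: "a \<in> sdom (cod_iso F)" and b: "b \<in> sdom (dom_iso F)" by auto
        have bij: "bij_betw (fun_iso F) (elems (dom_iso F)) (elems (cod_iso F))" by (rule IT_iso[OF F])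
        have ea: "cls (cod_iso F) a \<in> elems (cod_iso F)" by (rule cls_elems[OF a])
        have eb: "cls (dom_iso F) b \<in> elems (dom_iso F)" by (rule cls_elems[OF b])
        have key: "(the_inv_into (elems (dom_iso F)) (fun_iso F) (cls (cod_iso F) a) = cls (dom_iso F) b)
            = (fun_iso F (cls (dom_iso F) b) = cls (cod_iso F) a)"
        proof
          assume h: "the_inv_into (elems (dom_iso F)) (fun_iso F) (cls (cod_iso F) a) = cls (dom_iso F) b"
          show "fun_iso F (cls (dom_iso F) b) = cls (cod_iso F) a"
            using f_the_inv_into_f_bij_betw[OF bij ea] h by simp
        next
          assume h: "fun_iso F (cls (dom_iso F) b) = cls (cod_iso F) a"
          show "the_inv_into (elems (dom_iso F)) (fun_iso F) (cls (cod_iso F) a) = cls (dom_iso F) b"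
            using the_inv_into_f_eq[OF bij_betw_imp_inj_on[OF bij] h eb] .
        qed
        show ?thesis unfolding topIT 4(3) Aab_def using F inI[OF F] inI'[OF F] a b ea key
          by (simp add: inv_simps)
      next
        case False
        then show ?thesis unfolding topIT 4(3) Aab_def by (auto simp: inv_simps)
      qed
    qed
    then show ?thesis using open_IT'[OF W] by simp
  qed
qed

end

theorem lemma2p5:
  fixes S :: "'s set"
    and ar_r :: "'r \<Rightarrow> nat" and ar_f :: "'f \<Rightarrow> nat"
    and T :: "('r, 'f, 'v, 'i) gseq set"
  assumes S_infinite: "infinite S"
    and S_large: "\<exists>h :: 'r + 'f \<Rightarrow> 's. inj h \<and> range h \<subseteq> S"
    and geom: "geometric_theory ar_r ar_f T"
  shows "continuous_map (IT_top S ar_r ar_f T) (MT_top S ar_r ar_f T) dom_iso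
       \<and> continuous_map (IT_top S ar_r ar_f T) (MT_top S ar_r ar_f T) cod_iso
       \<and> continuous_map (ITfib_top S ar_r ar_f T) (IT_top S ar_r ar_f T) comp_iso
       \<and> continuous_map (MT_top S ar_r ar_f T) (IT_top S ar_r ar_f T) id_iso
       \<and> continuous_map (IT_top S ar_r ar_f T) (IT_top S ar_r ar_f T) inv_iso"
  using dom_cont[of S ar_r ar_f T] cod_cont[of S ar_r ar_f T] comp_cont[of S ar_r ar_f T]
    id_cont[of S ar_r ar_f T] inv_cont[of S ar_r ar_f T] by blast

end
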